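(* Let $(N_n)_{n\in\mathbb{N}}$ be a strictly increasing sequence of natural numbers and let $f_n:\ell_1\to\mathbb{R}$ be defined as below. Then $\big\|\sum_{i=1}^n f_i \big\|_{FBL[c_0]} \leq 1$ for every $n \in \mathbb{N}$.
   Context: Identify $c_0^*=\ell_1$ and write $x^*=(x^*_1,x^*_2,\ldots)$. For $n<m$ let $g_{nm}: \ell_1 \to [0,1]$ be any continuous function such that $g_{nm}(x^* ) = 0$ if $N_m|x_n^*| \leq |x_m^*|$, $g_{nm}(x^* ) = 1$ if $|x_m^*| \leq (N_m-1)|x_n^*|$, and $g_{nm}(x^* )=g_{nm}(x^*/\|x^*\|)$ whenever $x^* \neq 0$. Define $$f_n(x^* ) = \big(|x_n^*|-N_n\max\{|x_m^*| : m<n\}\big)^+ \cdot \prod_{m > n}g_{nm}(x^* ),$$ where $r^+=\max\{r,0\}$ and the max over the empty set is $0$. For $f:\ell_1\to\mathbb{R}$, $\|f\|_{FBL[c_0]} = \sup \{\sum_{i = 1}^k |f(x_{i}^{*})| : k \in \mathbb{N},\ x_1^{*}, \ldots, x_k^{*} \in \ell_1,\ \sup_{x \in B_{c_0}} \sum_{i=1}^k |x_i^{*}(x)| \leq 1 \}$, the norm of the free Banach lattice $FBL[c_0]$ (the closure in this norm of the vector sublattice of $\mathbb{R}^{\ell_1}$ generated by the evaluations $x^*\mapsto x^*(x)$, $x\in c_0$). *)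

theory Defs
  imports "HOL-Analysis.Analysis"
begin

text \<open>Sequences are indexed from 0 (coordinate i here = coordinate i+1 in the paper).
  The dual c0* is identified with l1, both realised as real sequences nat => real.\<close>

definition l1 :: "(nat \<Rightarrow> real) set" where
  "l1 = {x. summable (\<lambda>i. \<bar>x i\<bar>)}"

definition l1norm :: "(nat \<Rightarrow> real) \<Rightarrow> real" where
  "l1norm x = (\<Sum>i. \<bar>x i\<bar>)"

definition c0 :: "(nat \<Rightarrow> real) set" where
  "c0 = {x. x \<longlonglongrightarrow> 0}"

definition ball_c0 :: "(nat \<Rightarrow> real) set" where
  "ball_c0 = {x \<in> c0. \<forall>i. \<bar>x i\<bar> \<le> 1}"

definition pairing :: "(nat \<Rightarrow> real) \<Rightarrow> (nat \<Rightarrow> real) \<Rightarrow> real" where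
  "pairing xs x = (\<Sum>i. xs i * x i)"

text \<open>The FBL[c0] norm of a function f : l1 -> R (valued in ereal, so that it is +\<infinity>
  when the defining supremum is unbounded).\<close>
definition fbl_norm :: "((nat \<Rightarrow> real) \<Rightarrow> real) \<Rightarrow> ereal" where
  "fbl_norm f = (SUP p \<in> {(k::nat, xs). (\<forall>i<k. xs i \<in> l1) \<and>
                       (\<forall>x\<in>ball_c0. (\<Sum>i<k. \<bar>pairing (xs i) x\<bar>) \<le> 1)}.
                   ereal (\<Sum>i<fst p. \<bar>f (snd p i)\<bar>))"

text \<open>Admissible g_{nm} (for n < m) for the sequence N.  The two value conditions are
  imposed where (x*_n, x*_m) \<noteq> (0,0), and continuity (l1-norm topology) on that set.\<close>
definition g_admissible :: "(nat \<Rightarrow> nat) \<Rightarrow> nat \<Rightarrow> nat \<Rightarrow> ((nat \<Rightarrow> real) \<Rightarrow> real) \<Rightarrow> bool" where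
  "g_admissible N n m h \<longleftrightarrow>
     (\<forall>x\<in>l1. 0 \<le> h x \<and> h x \<le> 1) \<and>
     (\<forall>x\<in>l1. (x n \<noteq> 0 \<or> x m \<noteq> 0) \<longrightarrow> real (N m) * \<bar>x n\<bar> \<le> \<bar>x m\<bar> \<longrightarrow> h x = 0) \<and>
     (\<forall>x\<in>l1. (x n \<noteq> 0 \<or> x m \<noteq> 0) \<longrightarrow> \<bar>x m\<bar> \<le> (real (N m) - 1) * \<bar>x n\<bar> \<longrightarrow> h x = 1) \<and>
     (\<forall>x\<in>l1. (\<exists>i. x i \<noteq> 0) \<longrightarrow> h x = h (\<lambda>i. x i / l1norm x)) \<and>
     (\<forall>x\<in>l1. (x n \<noteq> 0 \<or> x m \<noteq> 0) \<longrightarrow> (\<forall>e>0. \<exists>d>0. \<forall>y\<in>l1. (y n \<noteq> 0 \<or> y m \<noteq> 0) \<longrightarrow>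
          l1norm (\<lambda>i. y i - x i) < d \<longrightarrow> \<bar>h y - h x\<bar> < e))"

text \<open>f_n; the infinite product over m > n is the limit of the partial products.\<close>
definition fn :: "(nat \<Rightarrow> nat) \<Rightarrow> (nat \<Rightarrow> nat \<Rightarrow> (nat \<Rightarrow> real) \<Rightarrow> real) \<Rightarrow> nat \<Rightarrow> (nat \<Rightarrow> real) \<Rightarrow> real" where
  "fn N g n x = max 0 (\<bar>x n\<bar> - real (N n) * Max ({\<bar>x m\<bar> | m. m < n} \<union> {0}))
                * lim (\<lambda>K. \<Prod>m\<in>{n<..K}. g n m x)"

end

theory Submission
  imports Defs
begin

lemma sign_choice:
  fixes a :: "nat \<Rightarrow> nat \<Rightarrow> real" and c t :: "nat \<Rightarrow> real"
  assumes "\<forall>j<k. t j \<le> \<bar>c j\<bar> \<or> (\<exists>m<n. t j \<le> \<bar>a j m\<bar>)"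
  shows "\<exists>e. (\<forall>m. e m = 1 \<or> e m = -1) \<and>
           (\<Sum>j<k. t j) \<le> (\<Sum>j<k. \<bar>c j + (\<Sum>m<n. a j m * e m)\<bar>)"
  using assms
proof (induction n arbitrary: c t)
  case 0
  then show ?case
    by (intro exI[of _ "\<lambda>_. 1"]) (auto intro: sum_mono)
next
  case (Suc n)
  define ts where "ts = (\<lambda>(s::real) j. if (\<exists>m<n. t j \<le> \<bar>a j m\<bar>) then t j else \<bar>c j + s * a j n\<bar>)"
  define cs where "cs = (\<lambda>(s::real) j. c j + s * a j n)"
  have IH: "\<exists>e. (\<forall>m. e m = 1 \<or> e m = -1) \<and>
           (\<Sum>j<k. ts s j) \<le> (\<Sum>j<k. \<bar>cs s j + (\<Sum>m<n. a j m * e m)\<bar>)" for s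
    by (rule Suc.IH) (auto simp: ts_def cs_def)
  have pt: "t j + t j \<le> ts 1 j + ts (-1) j" if "j < k" for j
  proof (cases "\<exists>m<n. t j \<le> \<bar>a j m\<bar>")
    case True then show ?thesis by (simp add: ts_def)
  next
    case False
    with Suc.prems that have "t j \<le> \<bar>c j\<bar> \<or> t j \<le> \<bar>a j n\<bar>"
      by (auto simp: less_Suc_eq)
    then show ?thesis using False by (auto simp: ts_def abs_if split: if_splits)
  qed
  have "(\<Sum>j<k. t j) + (\<Sum>j<k. t j) \<le> (\<Sum>j<k. ts 1 j) + (\<Sum>j<k. ts (-1) j)"
    unfolding sum.distrib[symmetric] by (rule sum_mono) (use pt in auto)
  then obtain s where s: "s = 1 \<or> s = -1" and st: "(\<Sum>j<k. t j) \<le> (\<Sum>j<k. ts s j)"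
  proof (cases "(\<Sum>j<k. t j) \<le> (\<Sum>j<k. ts 1 j)")
    case True then show ?thesis using that by auto
  next
    case False
    then have "(\<Sum>j<k. t j) \<le> (\<Sum>j<k. ts (-1) j)" using \<open>_ + _ \<le> _\<close> by linarith
    then show ?thesis using that by auto
  qed
  obtain e where e: "\<forall>m. e m = 1 \<or> e m = -1"
    and ee: "(\<Sum>j<k. ts s j) \<le> (\<Sum>j<k. \<bar>cs s j + (\<Sum>m<n. a j m * e m)\<bar>)"
    using IH by blast
  define e' where "e' = e(n := s)"
  have "(\<Sum>m<n. a j m * e' m) = (\<Sum>m<n. a j m * e m)" for j
    by (rule sum.cong) (auto simp: e'_def)
  then have eq: "cs s j + (\<Sum>m<n. a j m * e m) = c j + (\<Sum>m<Suc n. a j m * e' m)" for j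
    by (simp add: cs_def e'_def algebra_simps)
  show ?case
    apply (rule exI[of _ e'])
    using e s st ee eq by (auto simp: e'_def)
qed

lemma fin_coords: "finite {\<bar>(x::nat\<Rightarrow>real) m\<bar> | m. m < n}"
proof -
  have "{\<bar>x m\<bar> | m. m < n} = (\<lambda>m. \<bar>x m\<bar>) ` {..<n}" by auto
  then show ?thesis by simp
qed

lemma Max_ge0: "(0::real) \<le> Max ({\<bar>(x::nat\<Rightarrow>real) m\<bar> | m. m < n} \<union> {0})"
  by (rule Max_ge) (auto simp: fin_coords)

lemma Max_ge_coord: "i < n \<Longrightarrow> \<bar>x i\<bar> \<le> Max ({\<bar>(x::nat\<Rightarrow>real) m\<bar> | m. m < n} \<union> {0})"
  by (rule Max_ge) (auto simp: fin_coords)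

lemma lim_prod_zero:
  assumes "i < m" "g i m x = 0"
  shows "lim (\<lambda>K. \<Prod>m\<in>{i<..K}. g i m x) = (0::real)"
proof (rule limI)
  have "\<forall>\<^sub>F K in sequentially. (\<Prod>m\<in>{i<..K}. g i m x) = 0"
    using assms by (intro eventually_sequentiallyI[of m]) (auto intro!: prod_zero)
  then show "(\<lambda>K. \<Prod>m\<in>{i<..K}. g i m x) \<longlonglongrightarrow> 0"
    by (rule tendsto_eventually)
qed

lemma lim_prod_bounds:
  assumes "\<And>m. i < m \<Longrightarrow> 0 \<le> g i m x \<and> g i m x \<le> (1::real)"
  shows "0 \<le> lim (\<lambda>K. \<Prod>m\<in>{i<..K}. g i m x) \<and> lim (\<lambda>K. \<Prod>m\<in>{i<..K}. g i m x) \<le> 1"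
proof -
  define P where "P = (\<lambda>K. \<Prod>m\<in>{i<..K}. g i m x)"
  have P0: "0 \<le> P K" for K unfolding P_def using assms by (auto intro: prod_nonneg)
  have P1: "P K \<le> 1" for K unfolding P_def using assms by (auto intro: prod_le_1)
  have "decseq P"
  proof (rule decseq_SucI)
    fix K
    show "P (Suc K) \<le> P K"
    proof (cases "i \<le> K")
      case True
      then have "{i<..Suc K} = insert (Suc K) {i<..K}" by auto
      then have "P (Suc K) = g i (Suc K) x * P K" unfolding P_def by simp
      then show ?thesis using assms[of "Suc K"] True P0[of K]
        by (simp add: mult_left_le_one_le)
    next
      case False
      then have "{i<..Suc K} = {i<..K}" by auto
      then show ?thesis unfolding P_def by simp
    qed
  qed
  then obtain L where L: "P \<longlonglongrightarrow> L" "\<forall>K. L \<le> P K"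
    using decseq_convergent[of P 0] P0 by blast
  have "0 \<le> L" using L(1) P0 by (intro LIMSEQ_le_const) auto
  moreover have "L \<le> 1" using L(2) P1[of 0] by (meson order_trans)
  ultimately show ?thesis using limI[OF L(1)] unfolding P_def by simp
qed

lemma fn_bounds:
  assumes adm: "\<And>a b. a < b \<Longrightarrow> g_admissible N a b (g a b)" and x: "x \<in> l1"
  shows "0 \<le> fn N g i x \<and> fn N g i x \<le> \<bar>x i\<bar>"
proof -
  have "0 \<le> g i m x \<and> g i m x \<le> 1" if "i < m" for m
    using adm[OF that] x unfolding g_admissible_def by blast
  then have L: "0 \<le> lim (\<lambda>K. \<Prod>m\<in>{i<..K}. g i m x) \<and> lim (\<lambda>K. \<Prod>m\<in>{i<..K}. g i m x) \<le> 1"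
    by (rule lim_prod_bounds)
  define A where "A = max 0 (\<bar>x i\<bar> - real (N i) * Max ({\<bar>x m\<bar> | m. m < i} \<union> {0}))"
  have "0 \<le> real (N i) * Max ({\<bar>x m\<bar> | m. m < i} \<union> {0})"
    using Max_ge0[of x i] by simp
  then have A: "0 \<le> A" "A \<le> \<bar>x i\<bar>" unfolding A_def by auto
  have "fn N g i x = A * lim (\<lambda>K. \<Prod>m\<in>{i<..K}. g i m x)"
    unfolding fn_def A_def by simp
  moreover have "A * lim (\<lambda>K. \<Prod>m\<in>{i<..K}. g i m x) \<le> A"
    using A L by (simp add: mult_left_le)
  ultimately show ?thesis using A L by simp
qed

lemma fn_disj:
  assumes adm: "\<And>a b. a < b \<Longrightarrow> g_admissible N a b (g a b)" and x: "x \<in> l1"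
    and ik: "i < k" and fi: "fn N g i x \<noteq> 0" and fk: "fn N g k x \<noteq> 0"
  shows False
proof -
  have "\<bar>x k\<bar> - real (N k) * Max ({\<bar>x m\<bar> | m. m < k} \<union> {0}) > 0"
    using fk unfolding fn_def by (auto simp: max_def split: if_splits)
  moreover have "real (N k) * \<bar>x i\<bar> \<le> real (N k) * Max ({\<bar>x m\<bar> | m. m < k} \<union> {0})"
    using Max_ge_coord[OF ik, of x] by (simp add: mult_left_mono)
  ultimately have big: "real (N k) * \<bar>x i\<bar> \<le> \<bar>x k\<bar>" by linarith
  have "\<bar>x i\<bar> - real (N i) * Max ({\<bar>x m\<bar> | m. m < i} \<union> {0}) > 0"
    using fi unfolding fn_def by (auto simp: max_def split: if_splits)
  moreover have "0 \<le> real (N i) * Max ({\<bar>x m\<bar> | m. m < i} \<union> {0})"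
    using Max_ge0[of x i] by simp
  ultimately have "\<bar>x i\<bar> > 0" by linarith
  then have xi: "x i \<noteq> 0" by simp
  have "\<forall>x\<in>l1. (x i \<noteq> 0 \<or> x k \<noteq> 0) \<longrightarrow> real (N k) * \<bar>x i\<bar> \<le> \<bar>x k\<bar> \<longrightarrow> g i k x = 0"
    using adm[OF ik] unfolding g_admissible_def by (elim conjE)
  then have "g i k x = 0"
    using x xi big by blast
  then have "lim (\<lambda>K. \<Prod>m\<in>{i<..K}. g i m x) = 0"
    by (rule lim_prod_zero[OF ik])
  then show False using fi unfolding fn_def by simp
qed

lemma sum_fn_bound:
  assumes adm: "\<And>a b. a < b \<Longrightarrow> g_admissible N a b (g a b)" and x: "x \<in> l1"
  shows "\<bar>\<Sum>i<n. fn N g i x\<bar> \<le> \<bar>0::real\<bar> \<or> (\<exists>m<n. \<bar>\<Sum>i<n. fn N g i x\<bar> \<le> \<bar>x m\<bar>)"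
proof (cases "\<exists>i<n. fn N g i x \<noteq> 0")
  case False
  then show ?thesis by simp
next
  case True
  then obtain i where i: "i < n" "fn N g i x \<noteq> 0" by blast
  have others: "fn N g j x = 0" if "j < n" "j \<noteq> i" for j
  proof (rule ccontr)
    assume "fn N g j x \<noteq> 0"
    then show False using that i fn_disj[OF adm x, of i j] fn_disj[OF adm x, of j i]
      by (cases "i < j") auto
  qed
  have "(\<Sum>j<n. fn N g j x) = fn N g i x + (\<Sum>j\<in>{..<n} - {i}. fn N g j x)"
    using i by (simp add: sum.remove)
  also have "(\<Sum>j\<in>{..<n} - {i}. fn N g j x) = 0"
    using others by (intro sum.neutral) auto
  finally show ?thesis using i fn_bounds[OF adm x, of i] by auto
qed

theorem mainTheorem9:
  fixes N :: "nat \<Rightarrow> nat" and g :: "nat \<Rightarrow> nat \<Rightarrow> (nat \<Rightarrow> real) \<Rightarrow> real" and n :: nat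
  assumes "strict_mono N"
    and "\<And>a b. a < b \<Longrightarrow> g_admissible N a b (g a b)"
  shows "fbl_norm (\<lambda>x. \<Sum>i<n. fn N g i x) \<le> 1"
  unfolding fbl_norm_def
proof (rule SUP_least)
  fix p assume "p \<in> {(k::nat, xs). (\<forall>i<k. xs i \<in> l1) \<and>
                       (\<forall>x\<in>ball_c0. (\<Sum>i<k. \<bar>pairing (xs i) x\<bar>) \<le> 1)}"
  then obtain k xs where p: "p = (k, xs)" and l1: "\<forall>i<k. xs i \<in> l1"
    and cons: "\<forall>x\<in>ball_c0. (\<Sum>i<k. \<bar>pairing (xs i) x\<bar>) \<le> 1" by blast
  define t where "t = (\<lambda>j. \<bar>\<Sum>i<n. fn N g i (xs j)\<bar>)"
  have "\<forall>j<k. t j \<le> \<bar>(\<lambda>_. 0::real) j\<bar> \<or> (\<exists>m<n. t j \<le> \<bar>xs j m\<bar>)"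
    using sum_fn_bound[OF assms(2)] l1 unfolding t_def by blast
  from sign_choice[OF this] obtain e where e: "\<forall>m. e m = 1 \<or> e m = -1"
    and te: "(\<Sum>j<k. t j) \<le> (\<Sum>j<k. \<bar>0 + (\<Sum>m<n. xs j m * e m)\<bar>)" by blast
  define y where "y = (\<lambda>m. if m < n then e m else 0::real)"
  have "y \<in> ball_c0"
  proof -
    have "\<forall>\<^sub>F m in sequentially. y m = 0"
      by (intro eventually_sequentiallyI[of n]) (auto simp: y_def)
    then have "y \<longlonglongrightarrow> 0" by (rule tendsto_eventually)
    moreover have "\<bar>y i\<bar> \<le> 1" for i using e[rule_format, of i] by (auto simp: y_def)
    ultimately show ?thesis unfolding ball_c0_def c0_def by auto
  qed
  then have c: "(\<Sum>j<k. \<bar>pairing (xs j) y\<bar>) \<le> 1" using cons by blast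
  have pe: "pairing (xs j) y = (\<Sum>m<n. xs j m * e m)" for j
  proof -
    have "pairing (xs j) y = (\<Sum>m<n. xs j m * y m)"
      unfolding pairing_def by (rule suminf_finite) (auto simp: y_def)
    also have "\<dots> = (\<Sum>m<n. xs j m * e m)" by (rule sum.cong) (auto simp: y_def)
    finally show ?thesis .
  qed
  have "(\<Sum>j<k. t j) \<le> 1" using te c pe by simp
  moreover have "(\<Sum>j<fst p. \<bar>(\<lambda>x. \<Sum>i<n. fn N g i x) (snd p j)\<bar>) = (\<Sum>j<k. t j)"
    unfolding p t_def fst_conv snd_conv by (rule refl)
  ultimately show "ereal (\<Sum>j<fst p. \<bar>(\<lambda>x. \<Sum>i<n. fn N g i x) (snd p j)\<bar>) \<le> 1"
    by (simp only: one_ereal_def ereal_less_eq(3))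
qed

end
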